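(* For every integer $N\ge16$ and $\rho\in[2/3,1)$ there is $C<\infty$ such that for every interval $I\subset\mathbb R$, $$\int_I\big|H_\flat(\mathbf 1_I\widehat{\dot\sigma})\big|^2\,d\widehat\omega\le C\,\widehat{\dot\sigma}(I),$$ where $H_\flat(\mathbf 1_I\widehat{\dot\sigma})(x)=\sum_{k,j:\dot z^k_j\in I}\widehat s^k_j K_\flat(x-\dot z^k_j)$, which converges absolutely for $x\in\mathsf E^{(N)}$.
   Context: Cantor intervals: fix an integer $N\ge16$ and $\rho\in[2/3,1)$. Set $I^0_1=[0,1]$. Each interval $I=[a,a+N^{-k}]$ of generation $k$ has two children of generation $k+1$: the left child $I_-=[a,a+N^{-k-1}]$ and the right child $I_+=[a+N^{-k}-N^{-k-1},a+N^{-k}]$. The $2^k$ intervals of generation $k$ are denoted $I^k_j$, $1\le j\le 2^k$, numbered left to right; $\mathcal D$ is the collection of all of them. $\dot z^k_j$ is the center of $I^k_j$. The Cantor set is $\mathsf E^{(N)}=\bigcap_{k}\bigcup_{j}I^k_j$. Redistributed Cantor measure: with $\eta=1/N$, $\widehat\omega$ is the unique Borel probability measure supported on $\mathsf E^{(N)}$ such that $\widehat\omega(I^1_1)=\widehat\omega(I^1_2)=\frac12$ and for every $I\in\mathcal D$ of generation $\ge1$: if $I$ is the left child of its parent then $\widehat\omega(I_-)=\frac{1+\eta}2\widehat\omega(I)$, $\widehat\omega(I_+)=\frac{1-\eta}2\widehat\omega(I)$; if $I$ is the right child of its parent then $\widehat\omega(I_-)=\frac{1-\eta}2\widehat\omega(I)$,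 $\widehat\omega(I_+)=\frac{1+\eta}2\widehat\omega(I)$. Weights: $\widehat s^k_j=N^{-2k}/\widehat\omega(I^k_j)$; $\widehat{\dot\sigma}=\sum_{k\ge0}\sum_{j=1}^{2^k}\widehat s^k_j\,\delta_{\dot z^k_j}$. Flattened kernel: $K_\flat$ is defined first on $[N^{-1/2},N^{1/2}]$ as a smooth nonincreasing function with values in $[N^{-1/2},N^{1/2}]$ such that $K_\flat(x)=1/x$ for $N^{-1/2}\le x\le(\rho N)^{-1/2}$ and for $(\rho N)^{1/2}\le x\le N^{1/2}$, and $K_\flat(x)=1$ for $(\rho^2N)^{-1/2}\le x\le(\rho^2N)^{1/2}$; then extended to $(0,\infty)$ by $K_\flat(x)=N^{-k}K_\flat(N^{-k}x)$ for $x\in[N^{k-1/2},N^{k+1/2}]$, $k\in\mathbb Z$, and to $\mathbb R\setminus\{0\}$ as an odd function. $H_\flat\mu(x)=\int K_\flat(x-y)\,d\mu(y)$. *)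

theory Defs
  imports "HOL-Analysis.Analysis" "HOL-Probability.Probability"
begin

text \<open>Cantor intervals. Indices j are 0-based: our index j (0 \<le> j < 2^k) corresponds
  to the paper's index j+1. The children of interval (k,j) are (k+1,2j) (left) and
  (k+1,2j+1) (right).\<close>

fun cantor_left :: "nat \<Rightarrow> nat \<Rightarrow> nat \<Rightarrow> real" where
  "cantor_left N 0 j = 0"
| "cantor_left N (Suc k) j = cantor_left N k (j div 2)
     + (if odd j then (real N) powr (- real k) - (real N) powr (- real (Suc k)) else 0)"

definition cantor_int :: "nat \<Rightarrow> nat \<Rightarrow> nat \<Rightarrow> real set" where
  "cantor_int N k j = {cantor_left N k j .. cantor_left N k j + (real N) powr (- real k)}"

definition cantor_center :: "nat \<Rightarrow> nat \<Rightarrow> nat \<Rightarrow> real" where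
  "cantor_center N k j = cantor_left N k j + (real N) powr (- real k) / 2"

definition cantor_set :: "nat \<Rightarrow> real set" where
  "cantor_set N = (\<Inter>k. \<Union>j\<in>{..<2^k}. cantor_int N k j)"

text \<open>Prescribed masses of the redistributed Cantor measure, eta = 1/N.
  For k \<ge> 1 the child (k+1,j) of parent (k, j div 2): the child is a left child iff j is
  even, the parent is a left child iff (j div 2) is even; the factor (1+eta)/2 goes to the
  child on the same side as the parent.\<close>

fun omega_mass :: "nat \<Rightarrow> nat \<Rightarrow> nat \<Rightarrow> real" where
  "omega_mass N 0 j = 1"
| "omega_mass N (Suc k) j = omega_mass N k (j div 2) *
     (if k = 0 then 1/2
      else if (even (j div 2) \<longleftrightarrow> even j) then (1 + 1 / real N) / 2 else (1 - 1 / real N) / 2)"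

definition redistributed_cantor_measure :: "nat \<Rightarrow> real measure \<Rightarrow> bool" where
  "redistributed_cantor_measure N M \<longleftrightarrow>
     sets M = sets borel \<and> prob_space M \<and>
     emeasure M (- cantor_set N) = 0 \<and>
     (\<forall>k j. j < 2^k \<longrightarrow> measure M (cantor_int N k j) = omega_mass N k j)"

definition weight_s :: "nat \<Rightarrow> real measure \<Rightarrow> nat \<Rightarrow> nat \<Rightarrow> real" where
  "weight_s N M k j = (real N) powr (- 2 * real k) / measure M (cantor_int N k j)"

definition sigma_dot :: "nat \<Rightarrow> real measure \<Rightarrow> real set \<Rightarrow> real" where
  "sigma_dot N M I = infsum (\<lambda>(k,j). weight_s N M k j) {(k,j). j < 2^k \<and> cantor_center N k j \<in> I}"

definition H_flat_I :: "nat \<Rightarrow> (real \<Rightarrow> real) \<Rightarrow> real measure \<Rightarrow> real set \<Rightarrow> real \<Rightarrow> real" where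
  "H_flat_I N K M I x = infsum (\<lambda>(k,j). weight_s N M k j * K (x - cantor_center N k j))
        {(k,j). j < 2^k \<and> cantor_center N k j \<in> I}"

text \<open>Flattened kernel: any function satisfying the paper's requirements.
  Smoothness on [a,b] is expressed by existence of all higher (one-sided at the endpoints)
  derivatives.\<close>
definition flat_kernel :: "nat \<Rightarrow> real \<Rightarrow> (real \<Rightarrow> real) \<Rightarrow> bool" where
  "flat_kernel N \<rho> K \<longleftrightarrow>
    (let a = (real N) powr (-1/2); b = (real N) powr (1/2) in
      (\<exists>D :: nat \<Rightarrow> real \<Rightarrow> real. (\<forall>x\<in>{a..b}. D 0 x = K x) \<and>
          (\<forall>n. \<forall>x\<in>{a..b}. (D n has_real_derivative D (Suc n) x) (at x within {a..b}))) \<and>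
      (\<forall>x y. a \<le> x \<longrightarrow> x \<le> y \<longrightarrow> y \<le> b \<longrightarrow> K y \<le> K x) \<and>
      (\<forall>x\<in>{a..b}. K x \<in> {a..b}) \<and>
      (\<forall>x. a \<le> x \<and> x \<le> (\<rho> * real N) powr (-1/2) \<longrightarrow> K x = 1 / x) \<and>
      (\<forall>x. (\<rho> * real N) powr (1/2) \<le> x \<and> x \<le> b \<longrightarrow> K x = 1 / x) \<and>
      (\<forall>x. (\<rho>^2 * real N) powr (-1/2) \<le> x \<and> x \<le> (\<rho>^2 * real N) powr (1/2) \<longrightarrow> K x = 1) \<and>
      (\<forall>k::int. \<forall>x. (real N) powr (real_of_int k - 1/2) \<le> x \<and> x \<le> (real N) powr (real_of_int k + 1/2)
           \<longrightarrow> K x = (real N) powr (- real_of_int k) * K ((real N) powr (- real_of_int k) * x)) \<and>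
      (\<forall>x. x \<noteq> 0 \<longrightarrow> K (- x) = - K x))"

end

theory Submission
  imports Defs
begin

lemma pw: "0 < N \<Longrightarrow> real N powr (- real k) = 1 / real N ^ k"
  by (simp add: powr_minus powr_realpow divide_inverse)

lemma cl_Suc: "0 < N \<Longrightarrow> cantor_left N (Suc k) j = cantor_left N k (j div 2)
     + (if odd j then 1 / real N ^ k - 1 / real N ^ Suc k else 0)"
proof -
  assume "0 < N"
  have a: "real N powr (- real (Suc k)) = 1 / real N ^ Suc k" by (rule pw) fact
  have b: "real N powr (- real k) = 1 / real N ^ k" by (rule pw) fact
  show ?thesis unfolding cantor_left.simps a b ..
qed

declare cantor_left.simps(2)[simp del]

lemma cint: "0 < N \<Longrightarrow> cantor_int N k j = {cantor_left N k j .. cantor_left N k j + 1 / real N ^ k}"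
  by (simp add: cantor_int_def pw)

lemma ccen: "0 < N \<Longrightarrow> cantor_center N k j = cantor_left N k j + 1 / (2 * real N ^ k)"
  by (simp add: cantor_center_def pw)

lemma cl_even: "cantor_left N (Suc k) (2 * i) = cantor_left N k i"
  by (simp add: cantor_left.simps(2))

lemma cl_odd: "0 < N \<Longrightarrow> cantor_left N (Suc k) (2 * i + 1) = cantor_left N k i + (1 / real N ^ k - 1 / real N ^ Suc k)"
  by (simp add: cl_Suc del: power_Suc)

lemma child_bounds:
  assumes "2 \<le> N"
  shows "cantor_left N k (j div 2) \<le> cantor_left N (Suc k) j \<and>
     cantor_left N (Suc k) j + 1 / real N ^ Suc k \<le> cantor_left N k (j div 2) + 1 / real N ^ k"
proof -
  have N: "real N \<ge> 2" using assms by simp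
  have a: "1 / real N ^ Suc k \<le> 1 / real N ^ k"
    using N by (simp add: divide_simps)
  have N0: "0 < N" using assms by simp
  have b: "0 \<le> 1 / real N ^ Suc k" by simp
  show ?thesis using a b unfolding cl_Suc[OF N0] by auto
qed

lemma sep:
  assumes "3 \<le> N"
  shows "j < 2^k \<Longrightarrow> p < 2^k \<Longrightarrow> j \<noteq> p \<Longrightarrow> \<bar>cantor_left N k j - cantor_left N k p\<bar> \<ge> 2 / real N ^ k"
proof (induction k arbitrary: j p)
  case 0 then show ?case by simp
next
  case (Suc k)
  have N: "real N \<ge> 3" using assms by simp
  have N0: "0 < N" using assms by simp
  let ?e = "1 / real N ^ k" let ?f = "1 / real N ^ Suc k"
  have ef: "?f = ?e / real N" by simp
  have e0: "?e > 0" using N by simp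
  have fe: "2 * ?f \<le> ?e - ?f" using N e0 unfolding ef by (simp add: field_simps)
  have fe2: "0 \<le> ?e - ?f" using fe e0 N unfolding ef by (simp add: field_simps)
  show ?case
  proof (cases "j div 2 = p div 2")
    case True
    then have "odd j \<noteq> odd p" using Suc.prems
      by (metis dvd_mult_div_cancel odd_two_times_div_two_succ)
    then show ?thesis using True fe fe2 by (auto simp: cl_Suc N0 simp del: power_Suc)
  next
    case False
    have "j div 2 < 2^k" "p div 2 < 2^k" using Suc.prems by auto
    with Suc.IH False have ih: "\<bar>cantor_left N k (j div 2) - cantor_left N k (p div 2)\<bar> \<ge> 2 * ?e" by simp
    have "2 * ?f \<le> ?e" using fe fe2 by linarith
    then show ?thesis using ih fe fe2 e0 by (auto simp: cl_Suc N0 abs_if split: if_splits simp del: power_Suc)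
  qed
qed

lemma K_pos:
  fixes N :: nat
  assumes N: "2 \<le> N" and fk: "flat_kernel N \<rho> K" and y: "0 < y"
  shows "0 \<le> K y \<and> K y \<le> real N / y"
proof -
  let ?n = "real N"
  have n1: "?n > 1" using N by simp
  define k where "k = \<lfloor>log ?n y + 1/2\<rfloor>"
  have k1: "real_of_int k \<le> log ?n y + 1/2" "log ?n y + 1/2 < real_of_int k + 1"
    unfolding k_def by linarith+
  have ly: "?n powr (log ?n y) = y" using n1 y by simp
  have lo: "?n powr (real_of_int k - 1/2) \<le> y"
    using k1 n1 ly by (metis diff_le_eq powr_mono less_imp_le)
  have hi: "y \<le> ?n powr (real_of_int k + 1/2)"
  proof -
    have "log ?n y \<le> real_of_int k + 1/2" using k1 by linarith
    then show ?thesis using n1 ly by (metis powr_mono less_imp_le)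
  qed
  have sc: "K y = ?n powr (- real_of_int k) * K (?n powr (- real_of_int k) * y)"
    using fk lo hi unfolding flat_kernel_def Let_def by blast
  define z where "z = ?n powr (- real_of_int k) * y"
  have zlo: "?n powr (-1/2) \<le> z"
  proof -
    have "?n powr (-1/2) = ?n powr (- real_of_int k) * ?n powr (real_of_int k - 1/2)"
      by (simp add: powr_add[symmetric])
    also have "\<dots> \<le> z" unfolding z_def using lo by (intro mult_left_mono) auto
    finally show ?thesis .
  qed
  have zhi: "z \<le> ?n powr (1/2)"
  proof -
    have "z \<le> ?n powr (- real_of_int k) * ?n powr (real_of_int k + 1/2)"
      unfolding z_def using hi by (intro mult_left_mono) auto
    also have "\<dots> = ?n powr (1/2)" by (simp add: powr_add[symmetric])
    finally show ?thesis .
  qed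
  have Kz: "K z \<in> {?n powr (-1/2) .. ?n powr (1/2)}"
    using fk zlo zhi unfolding flat_kernel_def Let_def by auto
  have "0 < ?n powr (-1/2)" using n1 by simp
  moreover have "?n powr (-1/2) \<le> K z" using Kz unfolding atLeastAtMost_iff by (rule conjunct1)
  ultimately have Kz0: "0 \<le> K z" by linarith
  have "K y \<le> ?n powr (- real_of_int k) * ?n powr (1/2)"
    unfolding sc z_def[symmetric] using Kz by (intro mult_left_mono) auto
  also have "\<dots> = ?n / ?n powr (real_of_int k + 1/2)"
  proof -
    have a: "?n powr (- real_of_int k) * ?n powr (1/2) = ?n powr (- real_of_int k + 1/2)"
      by (rule powr_add[symmetric])
    have b: "?n powr 1 / ?n powr (real_of_int k + 1/2) = ?n powr (1 - (real_of_int k + 1/2))"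
      by (rule powr_diff[symmetric])
    have c: "?n powr 1 = ?n" using n1 by simp
    have d: "1 - (real_of_int k + 1/2) = - real_of_int k + 1/2" by simp
    show ?thesis using a b c d by simp
  qed
  also have "\<dots> \<le> ?n / y" using hi y n1 by (intro divide_left_mono) auto
  finally show ?thesis unfolding sc z_def[symmetric] using Kz0 by simp
qed

lemma K_bound:
  fixes N :: nat
  assumes N: "2 \<le> N" and fk: "flat_kernel N \<rho> K" and y: "y \<noteq> 0"
  shows "\<bar>K y\<bar> \<le> real N / \<bar>y\<bar>"
proof (cases "y > 0")
  case True then show ?thesis using K_pos[OF N fk True] by simp
next
  case False
  then have "0 < -y" using y by simp
  from K_pos[OF N fk this] have "0 \<le> K (-y) \<and> K (-y) \<le> real N / (-y)" .
  moreover have "K (-y) = - K y" using fk y unfolding flat_kernel_def Let_def by blast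
  ultimately show ?thesis using False by simp
qed

locale cN = fixes N :: nat assumes N16: "16 \<le> N"
begin

lemma N0: "0 < N" using N16 by simp
lemma RN: "real N \<ge> 16" using N16 by simp

lemma nested: "cantor_int N (k + d) i \<subseteq> cantor_int N k (i div 2^d)"
proof (induction d arbitrary: i)
  case 0 then show ?case by simp
next
  case (Suc d)
  have "cantor_int N (k + Suc d) i \<subseteq> cantor_int N (k + d) (i div 2)"
    using child_bounds[of N "k+d" i] N16 by (auto simp: cint[OF N0])
  also have "\<dots> \<subseteq> cantor_int N k (i div 2 div 2^d)" by (rule Suc.IH)
  also have "i div 2 div 2^d = i div 2^Suc d" by (simp add: div_mult2_eq mult.commute)
  finally show ?case .
qed

lemma nested': "k \<le> m \<Longrightarrow> cantor_int N m i \<subseteq> cantor_int N k (i div 2^(m-k))"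
  using nested[of k "m-k" i] by simp

lemma disj: "j < 2^k \<Longrightarrow> p < 2^k \<Longrightarrow> j \<noteq> p \<Longrightarrow> cantor_int N k j \<inter> cantor_int N k p = {}"
proof -
  assume a: "j < 2^k" "p < 2^k" "j \<noteq> p"
  have s: "\<bar>cantor_left N k j - cantor_left N k p\<bar> \<ge> 2 / real N ^ k" using sep[OF _ a] N16 by simp
  define e where "e = 1 / real N ^ k"
  have e0: "0 < e" using N0 by (simp add: e_def)
  have s': "2 * e \<le> \<bar>cantor_left N k j - cantor_left N k p\<bar>" using s by (simp add: e_def)
  have ci: "\<And>i. cantor_int N k i = {cantor_left N k i .. cantor_left N k i + e}"
    by (simp add: cint[OF N0] e_def)
  show ?thesis unfolding ci using s' e0 by (auto simp: abs_if split: if_splits)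
qed

lemma E_iff: "x \<in> cantor_set N \<longleftrightarrow> (\<forall>n. \<exists>i<2^n. x \<in> cantor_int N n i)"
  by (auto simp: cantor_set_def)

lemma cl_mult: "cantor_left N (m + d) (i * 2^d) = cantor_left N m i"
proof (induction d)
  case 0 then show ?case by simp
next
  case (Suc d)
  have "cantor_left N (m + Suc d) (i * 2^Suc d) = cantor_left N (Suc (m+d)) (2*(i*2^d))"
    by (simp add: mult.commute mult.left_commute)
  also have "\<dots> = cantor_left N (m+d) (i*2^d)" by (rule cl_even)
  finally show ?case using Suc by simp
qed

lemma left_in_int: "cantor_left N m i \<in> cantor_int N m i"
  using N0 by (simp add: cint[OF N0])

lemma left_in_E: assumes "i < 2^m" shows "cantor_left N m i \<in> cantor_set N"
  unfolding E_iff
proof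
  fix n
  show "\<exists>j<2^n. cantor_left N m i \<in> cantor_int N n j"
  proof (cases "m \<le> n")
    case True
    then obtain d where d: "n = m + d" using le_Suc_ex by blast
    have "i * 2^d < 2^n" using assms d by (simp add: power_add)
    moreover have "cantor_left N m i \<in> cantor_int N n (i * 2^d)"
      using left_in_int[of n "i * 2^d"] d cl_mult by simp
    ultimately show ?thesis by blast
  next
    case False
    then have "n \<le> m" by simp
    have "i div 2^(m-n) < 2^n"
      using assms \<open>n \<le> m\<close> by (simp add: div_less_iff_less_mult power_add[symmetric])
    moreover have "cantor_left N m i \<in> cantor_int N n (i div 2^(m-n))"
      using nested'[OF \<open>n \<le> m\<close>] left_in_int by blast
    ultimately show ?thesis by blast
  qed
qed

lemma E_child: assumes "x \<in> cantor_set N" "x \<in> cantor_int N k j" "j < 2^k"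
  shows "x \<in> cantor_int N (Suc k) (2*j) \<or> x \<in> cantor_int N (Suc k) (2*j+1)"
proof -
  obtain i where i: "i < 2^Suc k" "x \<in> cantor_int N (Suc k) i" using assms(1) E_iff by blast
  have "x \<in> cantor_int N k (i div 2)" using nested[of k 1 i] i by auto
  moreover have "i div 2 < 2^k" using i by simp
  ultimately have "i div 2 = j" using disj[of "i div 2" k j] assms by blast
  then have "i = 2*j \<or> i = 2*j+1" by auto
  then show ?thesis using i by auto
qed

lemma dist_center: assumes "x \<in> cantor_set N" "j < 2^m"
  shows "\<bar>x - cantor_center N m j\<bar> \<ge> 1 / (4 * real N ^ m)"
proof -
  obtain i where i: "i < 2^Suc m" "x \<in> cantor_int N (Suc m) i" using assms(1) E_iff by blast
  have xp: "x \<in> cantor_int N m (i div 2)" using nested[of m 1 i] i by auto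
  let ?e = "1 / real N ^ m"
  have e0: "?e > 0" using N0 by simp
  have ef: "1 / real N ^ Suc m \<le> ?e / 4" using RN e0 by (simp add: field_simps)
  have c: "cantor_center N m j = cantor_left N m j + ?e / 2" by (simp add: ccen[OF N0])
  have q: "1 / (4 * real N ^ m) = ?e / 4" by simp
  show ?thesis
  proof (cases "i div 2 = j")
    case True
    then have "i = 2*j \<or> i = 2*j+1" by auto
    then show ?thesis
    proof
      assume "i = 2*j"
      then have "x \<le> cantor_left N m j + 1 / real N ^ Suc m" using i cl_even by (simp add: cint[OF N0])
      moreover have "x \<ge> cantor_left N m j" using i \<open>i = 2*j\<close> cl_even by (simp add: cint[OF N0])
      ultimately show ?thesis using c ef q e0 by (simp add: abs_if)
    next
      assume "i = 2*j+1"
      then have "x \<ge> cantor_left N m j + (?e - 1 / real N ^ Suc m)" using i cl_odd[OF N0] by (simp add: cint[OF N0] del: power_Suc)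
      moreover have "x \<le> cantor_left N m j + ?e" using xp True by (simp add: cint[OF N0])
      ultimately show ?thesis using c ef q e0 by (simp add: abs_if)
    qed
  next
    case False
    have "i div 2 < 2^m" using i by simp
    then have s: "\<bar>cantor_left N m (i div 2) - cantor_left N m j\<bar> \<ge> 2 * ?e"
      using sep[of N "i div 2" m j] False assms N16 by simp
    have "x \<ge> cantor_left N m (i div 2)" "x \<le> cantor_left N m (i div 2) + ?e"
      using xp by (auto simp: cint[OF N0])
    then show ?thesis using s c q e0 by (simp add: abs_if split: if_splits)
  qed
qed


definition "cc = (1 - 1 / real N) / 2"
definition "qq = (1 + 1 / real N) / 2"

lemma cc_pos: "0 < cc" using RN by (simp add: cc_def field_simps)
lemma cc_ge: "cc \<ge> 15/32" using RN by (simp add: cc_def field_simps)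
lemma qq_le: "qq \<le> 17/32" using RN by (simp add: qq_def field_simps)
lemma qq_pos: "0 < qq" using RN by (simp add: qq_def field_simps)

lemma om_step: "omega_mass N (Suc k) i = omega_mass N k (i div 2) * (if k = 0 then 1/2
      else if (even (i div 2) \<longleftrightarrow> even i) then qq else cc)"
  by (simp add: cc_def qq_def)

lemma fac_bounds: "cc \<le> (if k = 0 then 1/2
      else if (even (i div 2) \<longleftrightarrow> even i) then qq else cc) \<and> (if k = 0 then 1/2
      else if (even (i div 2) \<longleftrightarrow> even i) then qq else cc) \<le> qq"
  using RN by (auto simp: cc_def qq_def field_simps)

lemma om_pos: "0 < omega_mass N k i"
proof (induction k arbitrary: i)
  case 0 then show ?case by simp
next
  case (Suc k)
  have "0 < (if k = 0 then 1/2 else if (even (i div 2) \<longleftrightarrow> even i) then qq else cc)"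
    using cc_pos qq_pos by auto
  then show ?case using Suc.IH[of "i div 2"] by (simp only: om_step) simp
qed

declare omega_mass.simps(2)[simp del]

lemma om_lower: "omega_mass N (k + d) i \<ge> omega_mass N k (i div 2^d) * cc^d"
proof (induction d arbitrary: i)
  case 0 then show ?case by simp
next
  case (Suc d)
  have e: "i div 2 div 2^d = i div 2^Suc d" by (simp add: div_mult2_eq mult.commute)
  have "omega_mass N k (i div 2^Suc d) * cc^Suc d = (omega_mass N k (i div 2 div 2^d) * cc^d) * cc"
    using e by simp
  also have "\<dots> \<le> omega_mass N (k+d) (i div 2) * cc"
    using Suc.IH[of "i div 2"] cc_pos by (intro mult_right_mono) auto
  also have "\<dots> \<le> omega_mass N (k + Suc d) i"
    using om_pos[of "k+d" "i div 2"] fac_bounds[of "k+d" i]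
    by (simp only: add_Suc_right om_step) (intro mult_left_mono, auto)
  finally show ?case .
qed

lemma om_upper: "omega_mass N (k + d) i \<le> omega_mass N k (i div 2^d) * qq^d"
proof (induction d arbitrary: i)
  case 0 then show ?case by simp
next
  case (Suc d)
  have e: "i div 2 div 2^d = i div 2^Suc d" by (simp add: div_mult2_eq mult.commute)
  have "omega_mass N (k + Suc d) i \<le> omega_mass N (k+d) (i div 2) * qq"
    using om_pos[of "k+d" "i div 2"] fac_bounds[of "k+d" i]
    by (simp only: add_Suc_right om_step) (intro mult_left_mono, auto)
  also have "\<dots> \<le> (omega_mass N k (i div 2 div 2^d) * qq^d) * qq"
    using Suc.IH[of "i div 2"] qq_pos by (intro mult_right_mono) auto
  also have "\<dots> = omega_mass N k (i div 2^Suc d) * qq^Suc d"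
    using e by simp
  finally show ?case .
qed

lemma om_le: "omega_mass N k i \<le> qq^k"
  using om_upper[where k=0 and d=k and i=i] by simp

lemma om_ge: "omega_mass N k i \<ge> cc^k"
  using om_lower[where k=0 and d=k and i=i] by simp



lemma ivl: "is_interval (I::real set) \<Longrightarrow> a \<in> I \<Longrightarrow> b \<in> I \<Longrightarrow> a \<le> x \<Longrightarrow> x \<le> b \<Longrightarrow> x \<in> I"
  unfolding is_interval_1 by blast

lemma classify:
  assumes I: "is_interval (I::real set)" and sub: "I \<inter> cantor_set N \<subseteq> cantor_int N k0 j"
    and j: "j < 2^k0" and y': "y' \<in> I \<inter> cantor_set N" and i: "i < 2^m"
    and c: "cantor_center N m i \<in> I"
  shows "(m \<le> k0 \<and> i = j div 2^(k0-m)) \<or> (k0 < m \<and> i div 2^(m-k0) = j)"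
proof -
  define g where "g = min m k0"
  define P where "P = i div 2^(m-g)"
  define Q where "Q = j div 2^(k0-g)"
  have gm: "g \<le> m" "g \<le> k0" unfolding g_def by auto
  have P2: "P < 2^g" unfolding P_def using i gm by (simp add: div_less_iff_less_mult power_add[symmetric])
  have Q2: "Q < 2^g" unfolding Q_def using j gm by (simp add: div_less_iff_less_mult power_add[symmetric])
  have LP: "cantor_int N m i \<subseteq> cantor_int N g P" unfolding P_def by (rule nested'[OF gm(1)])
  have JQ: "cantor_int N k0 j \<subseteq> cantor_int N g Q" unfolding Q_def by (rule nested'[OF gm(2)])
  show ?thesis
  proof (cases "P = Q")
    case True
    show ?thesis
    proof (cases "m \<le> k0")
      case True
      then have "g = m" unfolding g_def by simp
      then show ?thesis using \<open>P = Q\<close> True unfolding P_def Q_def by simp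
    next
      case False
      then have "g = k0" unfolding g_def by simp
      then show ?thesis using \<open>P = Q\<close> False unfolding P_def Q_def by simp
    qed
  next
    case False
    have dj: "cantor_int N g P \<inter> cantor_int N g Q = {}" by (rule disj[OF P2 Q2 False])
    let ?l = "cantor_left N m i" let ?e = "1 / real N ^ m"
    define e1 where "e1 = ?l"
    define e2 where "e2 = cantor_left N (Suc m) (2*i+1)"
    have e1E: "e1 \<in> cantor_set N" unfolding e1_def by (rule left_in_E[OF i])
    have e2E: "e2 \<in> cantor_set N" unfolding e2_def by (rule left_in_E) (use i in simp)
    have e1L: "e1 \<in> cantor_int N m i" unfolding e1_def by (rule left_in_int)
    have "e2 \<in> cantor_int N (m+1) (2*i+1)" unfolding e2_def using left_in_int by simp
    then have e2L: "e2 \<in> cantor_int N m i" using nested[of m 1 "2*i+1"] by auto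
    have e0: "?e > 0" using N0 by simp
    have ef: "1 / real N ^ Suc m \<le> ?e / 4" using RN e0 by (simp add: field_simps)
    have cc': "cantor_center N m i = ?l + ?e/2" by (simp add: ccen[OF N0])
    have e2v: "e2 = ?l + (?e - 1 / real N ^ Suc m)" unfolding e2_def by (rule cl_odd[OF N0])
    have o1: "e1 \<le> cantor_center N m i" unfolding cc' e1_def using e0 by simp
    have "?e/2 \<le> ?e - 1 / real N ^ Suc m" using ef e0 by linarith
    then have o2: "cantor_center N m i \<le> e2" unfolding cc' e2v by linarith
    have cP: "cantor_center N m i \<in> cantor_int N g P"
    proof -
      have "cantor_center N m i \<in> cantor_int N m i"
        using o1 o2 e1L e2L unfolding cint[OF N0] atLeastAtMost_iff by linarith
      then show ?thesis using LP by auto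
    qed
    have yQ: "y' \<in> cantor_int N g Q" using y' sub JQ by auto
    then have ynP: "y' \<notin> cantor_int N g P" using dj by auto
    let ?lP = "cantor_left N g P" let ?eg = "1 / real N ^ g"
    have intP: "cantor_int N g P = {?lP .. ?lP + ?eg}" by (rule cint[OF N0])
    show ?thesis
    proof (cases "y' < cantor_center N m i")
      case True
      have "y' < ?lP" using True ynP cP unfolding intP by auto
      moreover have "?lP \<le> e1" using e1L LP unfolding intP by auto
      ultimately have "e1 \<in> I" using ivl[OF I, of y' "cantor_center N m i" e1] y' c o1 by auto
      then have "e1 \<in> cantor_int N g Q" using e1E sub JQ by auto
      moreover have "e1 \<in> cantor_int N g P" using e1L LP by auto
      ultimately show ?thesis using dj by auto
    next
      case False
      have "y' > ?lP + ?eg" using False ynP cP unfolding intP by auto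
      moreover have "e2 \<le> ?lP + ?eg" using e2L LP unfolding intP by auto
      ultimately have "e2 \<in> I" using ivl[OF I, of "cantor_center N m i" y' e2] y' c o2 by auto
      then have "e2 \<in> cantor_int N g Q" using e2E sub JQ by auto
      moreover have "e2 \<in> cantor_int N g P" using e2L LP by auto
      ultimately show ?thesis using dj by auto
    qed
  qed
qed

lemma geo_half: "(\<Sum>m\<in>{k0<..K}. (1/2::real)^(m-k0)) \<le> 1 - (1/2)^(K-k0)"
proof (induction K)
  case 0 then show ?case by simp
next
  case (Suc K)
  show ?case
  proof (cases "k0 \<le> K")
    case True
    have s: "{k0<..Suc K} = insert (Suc K) {k0<..K}" using True by auto
    have e: "Suc K - k0 = Suc (K - k0)" using True by simp
    have "(\<Sum>m\<in>{k0<..Suc K}. (1/2::real)^(m-k0)) = (1/2)^(Suc K - k0) + (\<Sum>m\<in>{k0<..K}. (1/2::real)^(m-k0))"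
      unfolding s by simp
    also have "\<dots> \<le> (1/2)^(Suc K - k0) + (1 - (1/2)^(K-k0))" using Suc.IH by simp
    also have "\<dots> = 1 - (1/2)^(Suc K - k0)" unfolding e by simp
    finally show ?thesis .
  next
    case False
    then have "{k0<..Suc K} = {}" by auto
    moreover have "Suc K - k0 = 0" using False by simp
    ultimately show ?thesis by simp
  qed
qed

lemma geo_rev: assumes "0 \<le> (x::real)" "x < 1" shows "(\<Sum>m\<in>{..n}. x^(n-m)) \<le> 1 / (1 - x)"
proof (induction n)
  case 0
  have "1 - x > 0" "1 - x \<le> 1" using assms by auto+
  then have "1 \<le> 1 / (1 - x)" by (simp add: le_divide_eq)
  then show ?case by simp
next
  case (Suc n)
  have "(\<Sum>m\<in>{..Suc n}. x^(Suc n-m)) = (\<Sum>m\<in>{..n}. x^(Suc n-m)) + 1" by simp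
  also have "(\<Sum>m\<in>{..n}. x^(Suc n-m)) = x * (\<Sum>m\<in>{..n}. x^(n-m))"
    unfolding sum_distrib_left by (intro sum.cong) (auto simp: Suc_diff_le)
  also have "x * (\<Sum>m\<in>{..n}. x^(n-m)) + 1 \<le> x * (1/(1-x)) + 1"
    using mult_left_mono[OF Suc.IH assms(1)] by simp
  also have "\<dots> = 1/(1-x)" using assms by (simp add: field_simps)
  finally show ?case .
qed

end

locale cM = cN + fixes M :: "real measure" assumes rcm: "redistributed_cantor_measure N M"
begin

lemma ps: "prob_space M" using rcm unfolding redistributed_cantor_measure_def by blast
lemma setsM: "sets M = sets borel" using rcm unfolding redistributed_cantor_measure_def by blast

lemma closedE: "closed (cantor_set N)"
  unfolding cantor_set_def by (intro closed_INT ballI closed_Union) (auto simp: cantor_int_def)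

lemma int_sets: "cantor_int N k j \<in> sets M" unfolding setsM cantor_int_def by simp

lemma AE_E: "AE x in M. x \<in> cantor_set N"
proof (rule AE_I')
  show "- cantor_set N \<in> null_sets M"
    using rcm closedE unfolding redistributed_cantor_measure_def
    by (auto simp: null_sets_def setsM intro: borel_closed)
qed auto

lemma meas_int: "j < 2^k \<Longrightarrow> measure M (cantor_int N k j) = omega_mass N k j"
  using rcm unfolding redistributed_cantor_measure_def by blast

lemma emeas_int: "j < 2^k \<Longrightarrow> emeasure M (cantor_int N k j) = ennreal (omega_mass N k j)"
  using meas_int finite_measure.emeasure_eq_measure[OF prob_space.finite_measure[OF ps]] by simp

lemma wt: "j < 2^k \<Longrightarrow> weight_s N M k j = 1 / real N ^ (2*k) / omega_mass N k j"
proof -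
  assume "j < 2^k"
  have "real N powr (- 2 * real k) = real N powr (- real (2*k))" by simp
  also have "\<dots> = 1 / real N ^ (2*k)" by (rule pw[OF N0])
  finally show ?thesis unfolding weight_s_def meas_int[OF \<open>j < 2^k\<close>] by simp
qed

lemma wt_nonneg: "j < 2^k \<Longrightarrow> 0 \<le> weight_s N M k j"
  using om_pos[of k j] by (simp add: wt)

lemma wt_le: "j < 2^k \<Longrightarrow> weight_s N M k j \<le> (1/2)^k / 2^k"
proof -
  assume j: "j < 2^k"
  have "weight_s N M k j = 1 / real N ^ (2*k) / omega_mass N k j" by (rule wt[OF j])
  also have "\<dots> \<le> 1 / real N ^ (2*k) / cc^k"
    using om_ge[of k j] cc_pos N0 om_pos[of k j] by (intro divide_left_mono mult_pos_pos) auto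
  also have "\<dots> = (1 / (real N ^ 2 * cc))^k" by (simp add: power_mult power_divide power_mult_distrib)
  also have "\<dots> \<le> (1 / 4)^k"
  proof (intro power_mono)
    have "real N ^ 2 * cc \<ge> 16^2 * (15/32)" using RN cc_ge
      by (intro mult_mono power_mono) auto
    then show "1 / (real N ^ 2 * cc) \<le> 1/4" by (simp add: field_simps)
  qed (use cc_pos N0 in auto)
  also have "\<dots> = (1/2)^k / 2^k" by (simp add: power_divide power_mult_distrib[symmetric])
  finally show ?thesis .
qed

lemma wt_summable: assumes "A \<subseteq> {(k,j). j < 2^k}"
  shows "(\<lambda>(k,j). weight_s N M k j) summable_on A"
proof (rule nonneg_bdd_above_summable_on)
  show "\<And>x. x \<in> A \<Longrightarrow> 0 \<le> (\<lambda>(k,j). weight_s N M k j) x" using assms wt_nonneg by auto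
  show "bdd_above (sum (\<lambda>(k,j). weight_s N M k j) ` {F. F \<subseteq> A \<and> finite F})"
  proof (rule bdd_aboveI)
    fix s assume "s \<in> sum (\<lambda>(k,j). weight_s N M k j) ` {F. F \<subseteq> A \<and> finite F}"
    then obtain F where F: "F \<subseteq> A" "finite F" and s: "s = sum (\<lambda>(k,j). weight_s N M k j) F" by auto
    define K where "K = Max (insert 0 (fst ` F))"
    have sub: "F \<subseteq> Sigma {..K} (\<lambda>k. {..<2^k})"
    proof
      fix x assume "x \<in> F"
      then have "fst x \<le> K" unfolding K_def using F by (intro Max_ge) auto
      then show "x \<in> Sigma {..K} (\<lambda>k. {..<2^k})" using \<open>x \<in> F\<close> F assms by auto
    qed
    have "s \<le> sum (\<lambda>(k,j). weight_s N M k j) (Sigma {..K} (\<lambda>k. {..<2^k}))"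
      unfolding s using sub wt_nonneg by (intro sum_mono2) auto
    also have "\<dots> = (\<Sum>k\<le>K. \<Sum>j<2^k. weight_s N M k j)" by (rule sum.Sigma[symmetric]) auto
    also have "\<dots> \<le> (\<Sum>k\<le>K. \<Sum>j<(2::nat)^k. (1/2::real)^k / 2^k)"
      by (intro sum_mono wt_le) auto
    also have "\<dots> = (\<Sum>k\<le>K. (1/2::real)^k)" by simp
    also have "\<dots> \<le> 2"
    proof -
      have "(\<Sum>k\<le>K. (1/2::real)^k) = (\<Sum>k<Suc K. (1/2::real)^k)" by (simp add: lessThan_Suc_atMost)
      also have "\<dots> = (1 - (1/2)^Suc K) / (1 - 1/2)" by (subst sum_gp_strict) simp
      also have "\<dots> \<le> 2" by simp
      finally show ?thesis .
    qed
    finally show "s \<le> 2" .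
  qed
qed

lemma wt_le_sigma: assumes "j < 2^k" "cantor_center N k j \<in> I"
  shows "weight_s N M k j \<le> sigma_dot N M I"
proof -
  let ?T = "{(k,j). j < 2^k \<and> cantor_center N k j \<in> I}"
  have "infsum (\<lambda>(k,j). weight_s N M k j) {(k,j)} \<le> infsum (\<lambda>(k,j). weight_s N M k j) ?T"
  proof (rule infsum_mono_neutral)
    show "(\<lambda>(k,j). weight_s N M k j) summable_on ?T" by (rule wt_summable) auto
  qed (use assms wt_summable wt_nonneg in auto)
  then show ?thesis unfolding sigma_dot_def by simp
qed

lemma sigma_nonneg: "0 \<le> sigma_dot N M I"
  unfolding sigma_dot_def by (rule infsum_nonneg) (auto intro: wt_nonneg)


lemma div_range: "0 < (p::nat) \<Longrightarrow> (i div p = j) \<longleftrightarrow> (j * p \<le> i \<and> i < (j+1) * p)"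
  by (metis div_nat_eqI div_times_less_eq_dividend dividend_less_div_times mult.commute
        add.commute mult_Suc Suc_eq_plus1 less_mult_imp_div_less div_le_mono div_mult_self1_is_m le_antisym not_less_eq)

lemma H_bound:
  fixes K :: "real \<Rightarrow> real"
  assumes fk: "flat_kernel N \<rho> K" and I: "is_interval I"
    and sub: "I \<inter> cantor_set N \<subseteq> cantor_int N k0 j" and j: "j < 2^k0"
    and y': "y' \<in> I \<inter> cantor_set N" and cJ: "cantor_center N k0 j \<in> I"
    and x: "x \<in> I \<inter> cantor_set N"
  defines "S \<equiv> {m. m \<le> k0 \<and> cantor_center N m (j div 2^(k0-m)) \<in> I}"
    and "a \<equiv> \<lambda>m. 1 / real N ^ m / omega_mass N m (j div 2^(k0-m))"
  shows "\<bar>H_flat_I N K M I x\<bar> \<le> 8 * real N * (\<Sum>m\<in>S. a m)"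
proof -
  let ?T = "{(k,j). j < 2^k \<and> cantor_center N k j \<in> I}"
  define f where "f = (\<lambda>(k,j). weight_s N M k j * K (x - cantor_center N k j))"
  define g where "g = (\<lambda>(m::nat,i::nat). 4 * real N * (1 / real N ^ m / omega_mass N m i))"
  define B where "B = 8 * real N * (\<Sum>m\<in>S. a m)"
  have xE: "x \<in> cantor_set N" using x by auto
  have g0: "\<And>p. 0 \<le> g p" unfolding g_def using om_pos N0 by (auto intro!: mult_nonneg_nonneg divide_nonneg_pos mult_pos_pos)
  have a0: "\<And>m. 0 \<le> a m" unfolding a_def
    by (intro divide_nonneg_nonneg less_imp_le[OF om_pos]) auto
  have fg: "\<And>p. p \<in> ?T \<Longrightarrow> \<bar>f p\<bar> \<le> g p"
  proof -
    fix p assume "p \<in> ?T"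
    then obtain m i where p: "p = (m,i)" and i: "i < 2^m" by auto
    let ?d = "x - cantor_center N m i"
    have dc: "\<bar>?d\<bar> \<ge> 1 / (4 * real N ^ m)" by (rule dist_center[OF xE i])
    have Nm: "0 < real N ^ m" using N0 by simp
    have dpos: "0 < 1 / (4 * real N ^ m)" using Nm by simp
    then have dp: "\<bar>?d\<bar> > 0" using dc by linarith
    then have d0: "?d \<noteq> 0" by simp
    have "\<bar>K ?d\<bar> \<le> real N / \<bar>?d\<bar>" by (rule K_bound[OF _ fk d0]) (use N16 in simp)
    also have "\<dots> \<le> real N / (1 / (4 * real N ^ m))"
      using dc dpos dp by (intro divide_left_mono mult_pos_pos) auto
    also have "\<dots> = 4 * real N * real N ^ m" by simp
    finally have Kb: "\<bar>K ?d\<bar> \<le> 4 * real N * real N ^ m" .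
    have w: "weight_s N M m i = 1 / real N ^ (2*m) / omega_mass N m i" by (rule wt[OF i])
    have w0: "0 \<le> weight_s N M m i" by (rule wt_nonneg[OF i])
    have "\<bar>f p\<bar> = weight_s N M m i * \<bar>K ?d\<bar>" unfolding p f_def using w0 by (simp add: abs_mult)
    also have "\<dots> \<le> weight_s N M m i * (4 * real N * real N ^ m)" using Kb w0 by (rule mult_left_mono)
    also have "\<dots> = g p"
    proof -
      have e: "real N ^ (2*m) = real N ^ m * real N ^ m" by (simp add: mult_2 power_add)
      have o: "0 < omega_mass N m i" by (rule om_pos)
      show ?thesis unfolding w p g_def e using Nm o by (simp add: field_simps)
    qed
    finally show "\<bar>f p\<bar> \<le> g p" .
  qed
  have cls: "\<And>m i. (m,i) \<in> ?T \<Longrightarrow> (m \<le> k0 \<and> i = j div 2^(k0-m)) \<or> (k0 < m \<and> i div 2^(m-k0) = j)"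
    using classify[OF I sub j y'] by auto
  have k0S: "k0 \<in> S" unfolding S_def using cJ by simp
  have finS: "finite S" unfolding S_def by auto
  have gS: "\<And>m. g (m, j div 2^(k0-m)) = 4 * real N * a m" unfolding g_def a_def by simp
  have desc: "\<And>Kx. (\<Sum>p\<in>Sigma {k0<..Kx} (\<lambda>m. {j*2^(m-k0) ..< (j+1)*2^(m-k0)}). g p) \<le> 4 * real N * a k0"
  proof -
    fix Kx
    let ?wJ = "omega_mass N k0 j"
    have wJ: "0 < ?wJ" by (rule om_pos)
    have inner: "\<And>m. m \<in> {k0<..Kx} \<Longrightarrow> (\<Sum>i\<in>{j*2^(m-k0) ..< (j+1)*2^(m-k0)}. g (m,i)) \<le> 4 * real N * a k0 * (1/2)^(m-k0)"
    proof -
      fix m assume m: "m \<in> {k0<..Kx}"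
      define d where "d = m - k0"
      have md: "m = k0 + d" using m unfolding d_def by auto
      have gi: "\<And>i. i \<in> {j*2^d ..< (j+1)*2^d} \<Longrightarrow> g (m,i) \<le> 4 * real N * (1 / real N ^ m / (?wJ * cc^d))"
      proof -
        fix i assume "i \<in> {j*2^d ..< (j+1)*2^d}"
        then have "i div 2^d = j" using div_range[of "2^d" i j] by simp
        then have "omega_mass N m i \<ge> ?wJ * cc^d" using om_lower[where k=k0 and d=d and i=i] md by simp
        moreover have "0 < ?wJ * cc^d" using wJ cc_pos by simp
        ultimately show "g (m,i) \<le> 4 * real N * (1 / real N ^ m / (?wJ * cc^d))"
          unfolding g_def using N0 by (simp add: divide_left_mono)
      qed
      have "(\<Sum>i\<in>{j*2^(m-k0) ..< (j+1)*2^(m-k0)}. g (m,i)) \<le> (\<Sum>i\<in>{j*2^d ..< (j+1)*2^d}. 4 * real N * (1 / real N ^ m / (?wJ * cc^d)))"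
        unfolding d_def[symmetric] by (intro sum_mono gi)
      also have "\<dots> = 2^d * (4 * real N * (1 / real N ^ m / (?wJ * cc^d)))"
        by (simp add: algebra_simps)
      also have "\<dots> = 4 * real N * a k0 * (2 / (real N * cc))^d"
        unfolding a_def md using N0 cc_pos wJ by (simp add: power_add power_divide power_mult_distrib field_simps)
      also have "\<dots> \<le> 4 * real N * a k0 * (1/2)^d"
      proof (intro mult_left_mono power_mono)
        have "real N * cc \<ge> 16 * (15/32)" using RN cc_ge by (intro mult_mono) auto
        then show "2 / (real N * cc) \<le> 1/2" using cc_pos by (simp add: field_simps)
      qed (use a0 cc_pos N0 in auto)
      finally show "(\<Sum>i\<in>{j*2^(m-k0) ..< (j+1)*2^(m-k0)}. g (m,i)) \<le> 4 * real N * a k0 * (1/2)^(m-k0)"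
        unfolding d_def .
    qed
    have "(\<Sum>p\<in>Sigma {k0<..Kx} (\<lambda>m. {j*2^(m-k0) ..< (j+1)*2^(m-k0)}). g p)
        = (\<Sum>m\<in>{k0<..Kx}. \<Sum>i\<in>{j*2^(m-k0) ..< (j+1)*2^(m-k0)}. g (m,i))"
      using sum.Sigma[of "{k0<..Kx}" "\<lambda>m. {j*2^(m-k0) ..< (j+1)*2^(m-k0)}" "\<lambda>m i. g (m,i)"]
      by (simp add: case_prod_beta')
    also have "\<dots> \<le> (\<Sum>m\<in>{k0<..Kx}. 4 * real N * a k0 * (1/2)^(m-k0))"
      by (rule sum_mono) (rule inner)
    also have "\<dots> = 4 * real N * a k0 * (\<Sum>m\<in>{k0<..Kx}. (1/2)^(m-k0))"
      by (simp add: sum_distrib_left)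
    also have "\<dots> \<le> 4 * real N * a k0 * 1"
    proof (intro mult_left_mono)
      have "0 \<le> (1/2::real)^(Kx-k0)" by simp
      then show "(\<Sum>m\<in>{k0<..Kx}. (1/2::real)^(m-k0)) \<le> 1" using geo_half[of k0 Kx]
        by linarith
    qed (use a0 in auto)
    finally show "(\<Sum>p\<in>Sigma {k0<..Kx} (\<lambda>m. {j*2^(m-k0) ..< (j+1)*2^(m-k0)}). g p) \<le> 4 * real N * a k0"
      by simp
  qed
  have finsum: "\<And>F. finite F \<Longrightarrow> F \<subseteq> ?T \<Longrightarrow> sum g F \<le> B"
  proof -
    fix F assume F: "finite F" "F \<subseteq> ?T"
    define F1 where "F1 = F \<inter> {p. fst p \<le> k0}"
    define F2 where "F2 = F \<inter> {p. k0 < fst p}"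
    have FU: "F = F1 \<union> F2" unfolding F1_def F2_def by auto
    have Fd: "F1 \<inter> F2 = {}" unfolding F1_def F2_def by auto
    have s: "sum g F = sum g F1 + sum g F2"
      unfolding FU by (rule sum.union_disjoint) (use F Fd in \<open>auto simp: F1_def F2_def\<close>)
    have F1s: "F1 \<subseteq> (\<lambda>m. (m, j div 2^(k0-m))) ` S"
    proof
      fix p assume p: "p \<in> F1"
      then obtain m i where mi: "p = (m,i)" "m \<le> k0" and pT: "(m,i) \<in> ?T" using F unfolding F1_def by auto
      then have "i = j div 2^(k0-m)" using cls[OF pT] by auto
      moreover have "cantor_center N m i \<in> I" using pT by auto
      ultimately show "p \<in> (\<lambda>m. (m, j div 2^(k0-m))) ` S" unfolding S_def using mi by auto
    qed
    have "sum g F1 \<le> sum g ((\<lambda>m. (m, j div 2^(k0-m))) ` S)"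
      by (rule sum_mono2) (use finS F1s g0 in auto)
    also have "\<dots> = (\<Sum>m\<in>S. g (m, j div 2^(k0-m)))"
      by (rule sum.reindex_cong[of "\<lambda>m. (m, j div 2^(k0-m))"]) (auto simp: inj_on_def)
    also have "\<dots> = 4 * real N * (\<Sum>m\<in>S. a m)" unfolding gS by (simp add: sum_distrib_left)
    finally have s1: "sum g F1 \<le> 4 * real N * (\<Sum>m\<in>S. a m)" .
    define Kx where "Kx = Max (insert 0 (fst ` F))"
    have F2s: "F2 \<subseteq> Sigma {k0<..Kx} (\<lambda>m. {j*2^(m-k0) ..< (j+1)*2^(m-k0)})"
    proof
      fix p assume p: "p \<in> F2"
      then obtain m i where mi: "p = (m,i)" "k0 < m" and pT: "(m,i) \<in> ?T" and pF: "p \<in> F"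
        using F unfolding F2_def by auto
      then have "i div 2^(m-k0) = j" using cls[OF pT] by auto
      then have "i \<in> {j*2^(m-k0) ..< (j+1)*2^(m-k0)}" using div_range[of "2^(m-k0)" i j] by simp
      moreover have "m \<le> Kx" unfolding Kx_def using F pF mi by (intro Max_ge) force+
      ultimately show "p \<in> Sigma {k0<..Kx} (\<lambda>m. {j*2^(m-k0) ..< (j+1)*2^(m-k0)})" using mi by auto
    qed
    have "sum g F2 \<le> (\<Sum>p\<in>Sigma {k0<..Kx} (\<lambda>m. {j*2^(m-k0) ..< (j+1)*2^(m-k0)}). g p)"
      by (rule sum_mono2) (use F2s g0 in auto)
    also have "\<dots> \<le> 4 * real N * a k0" by (rule desc)
    also have "\<dots> \<le> 4 * real N * (\<Sum>m\<in>S. a m)"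
      using member_le_sum[of k0 S a] k0S finS a0 N0 by (intro mult_left_mono) auto
    finally have s2: "sum g F2 \<le> 4 * real N * (\<Sum>m\<in>S. a m)" .
    show "sum g F \<le> B" unfolding s B_def using s1 s2 by simp
  qed
  have fs: "\<And>F. finite F \<Longrightarrow> F \<subseteq> ?T \<Longrightarrow> (\<Sum>p\<in>F. norm (f p)) \<le> B"
  proof -
    fix F assume F: "finite F" "F \<subseteq> ?T"
    have "(\<Sum>p\<in>F. norm (f p)) \<le> sum g F" using F fg by (intro sum_mono) auto
    also have "\<dots> \<le> B" by (rule finsum[OF F])
    finally show "(\<Sum>p\<in>F. norm (f p)) \<le> B" .
  qed
  have abss: "(\<lambda>p. norm (f p)) summable_on ?T"
  proof (rule nonneg_bdd_above_summable_on)
    show "bdd_above (sum (\<lambda>p. norm (f p)) ` {F. F \<subseteq> ?T \<and> finite F})"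
      using fs by (auto intro!: bdd_aboveI)
  qed simp
  have "\<bar>H_flat_I N K M I x\<bar> = norm (infsum f ?T)" unfolding H_flat_I_def f_def by simp
  also have "\<dots> \<le> infsum (\<lambda>p. norm (f p)) ?T" by (rule norm_infsum_bound[OF abss])
  also have "\<dots> \<le> B" by (rule infsum_le_finite_sums[OF abss fs])
  finally show ?thesis unfolding B_def .
qed


lemma lin1: "(y::real) \<le> l + f \<Longrightarrow> f \<le> e / 4 \<Longrightarrow> 0 < e \<Longrightarrow> y \<le> l + e/2" by linarith
lemma lin2: "(y::real) \<ge> l + (e - f) \<Longrightarrow> f \<le> e / 4 \<Longrightarrow> 0 < e \<Longrightarrow> l + e/2 \<le> y" by linarith

lemma fm: "finite_measure M" by (rule prob_space.finite_measure[OF ps])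

lemma sum_est:
  fixes I :: "real set"
  assumes j: "j < 2^k0"
  defines "S \<equiv> {m. m \<le> k0 \<and> cantor_center N m (j div 2^(k0-m)) \<in> I}"
    and "a \<equiv> \<lambda>m. 1 / real N ^ m / omega_mass N m (j div 2^(k0-m))"
  shows "(\<Sum>m\<in>S. a m)^2 * omega_mass N k0 j \<le> 16 * sigma_dot N M I"
proof -
  let ?wJ = "omega_mass N k0 j"
  let ?s = "sigma_dot N M I"
  have wJ: "0 < ?wJ" by (rule om_pos)
  have s0: "0 \<le> ?s" by (rule sigma_nonneg)
  have a0: "\<And>m. 0 \<le> a m" unfolding a_def
    by (intro divide_nonneg_nonneg less_imp_le[OF om_pos]) auto
  have bnd: "\<And>m. m \<in> S \<Longrightarrow> a m * sqrt ?wJ \<le> sqrt ?s * (3/4)^(k0-m)"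
  proof -
    fix m assume m: "m \<in> S"
    let ?i = "j div 2^(k0-m)"
    let ?wm = "omega_mass N m ?i"
    have mk: "m \<le> k0" and cI: "cantor_center N m ?i \<in> I" using m unfolding S_def by auto
    have i2: "?i < 2^m" using j mk by (simp add: div_less_iff_less_mult power_add[symmetric])
    have wm: "0 < ?wm" by (rule om_pos)
    have "a m ^ 2 * ?wm = weight_s N M m ?i"
      unfolding wt[OF i2] a_def using wm by (simp add: power2_eq_square power_mult mult_2 power_add field_simps)
    also have "\<dots> \<le> ?s" by (rule wt_le_sigma[OF i2 cI])
    finally have A: "a m ^ 2 * ?wm \<le> ?s" .
    have B: "?wJ \<le> ?wm * qq^(k0-m)" using om_upper[where k=m and d="k0-m" and i=j] mk by simp
    have C: "qq^(k0-m) \<le> (9/16)^(k0-m)" using qq_le qq_pos by (intro power_mono) auto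
    have "(a m * sqrt ?wJ)^2 = a m ^ 2 * ?wJ" using wJ by (simp add: power_mult_distrib)
    also have "\<dots> \<le> a m ^ 2 * (?wm * qq^(k0-m))" using B by (intro mult_left_mono) auto
    also have "\<dots> = (a m ^ 2 * ?wm) * qq^(k0-m)" by simp
    also have "\<dots> \<le> ?s * qq^(k0-m)" using A qq_pos by (intro mult_right_mono) auto
    also have "\<dots> \<le> ?s * (9/16)^(k0-m)" using C s0 by (intro mult_left_mono) auto
    also have "\<dots> = (sqrt ?s * (3/4)^(k0-m))^2"
    proof -
      have "((3/4::real)^(k0-m))^2 = (9/16)^(k0-m)"
        by (simp add: power2_eq_square power_mult_distrib[symmetric])
      then show ?thesis using s0 by (simp add: power_mult_distrib)
    qed
    finally have "(a m * sqrt ?wJ)^2 \<le> (sqrt ?s * (3/4)^(k0-m))^2" .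
    then show "a m * sqrt ?wJ \<le> sqrt ?s * (3/4)^(k0-m)"
      by (rule power2_le_imp_le) (use s0 in simp)
  qed
  have finS: "finite S" unfolding S_def by auto
  have "(\<Sum>m\<in>S. a m) * sqrt ?wJ = (\<Sum>m\<in>S. a m * sqrt ?wJ)" by (simp add: sum_distrib_right)
  also have "\<dots> \<le> (\<Sum>m\<in>S. sqrt ?s * (3/4)^(k0-m))" by (intro sum_mono bnd)
  also have "\<dots> \<le> (\<Sum>m\<in>{..k0}. sqrt ?s * (3/4)^(k0-m))"
    by (rule sum_mono2) (use s0 in \<open>auto simp: S_def\<close>)
  also have "\<dots> = sqrt ?s * (\<Sum>m\<in>{..k0}. (3/4)^(k0-m))" by (simp add: sum_distrib_left)
  also have "\<dots> \<le> sqrt ?s * 4"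
    using geo_rev[of "3/4" k0] s0 by (intro mult_left_mono) auto
  finally have D: "(\<Sum>m\<in>S. a m) * sqrt ?wJ \<le> sqrt ?s * 4" .
  have E0: "0 \<le> (\<Sum>m\<in>S. a m) * sqrt ?wJ" using a0 wJ by (simp add: sum_nonneg)
  have "(\<Sum>m\<in>S. a m)^2 * ?wJ = ((\<Sum>m\<in>S. a m) * sqrt ?wJ)^2" using wJ by (simp add: power_mult_distrib)
  also have "\<dots> \<le> (sqrt ?s * 4)^2" using D E0 by (intro power_mono) auto
  also have "\<dots> = 16 * ?s" using s0 by (simp add: power_mult_distrib)
  finally show ?thesis .
qed

lemma main_est:
  fixes K :: "real \<Rightarrow> real"
  assumes fk: "flat_kernel N \<rho> K" and I: "is_interval I"
  shows "(\<integral>\<^sup>+ x \<in> I. ennreal ((H_flat_I N K M I x)\<^sup>2) \<partial>M) \<le> ennreal (1024 * (real N)^2 * sigma_dot N M I)"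
proof (cases "\<forall>k. \<exists>j<2^k. I \<inter> cantor_set N \<subseteq> cantor_int N k j")
  case True
  then have "\<forall>k. \<exists>j. j < 2^k \<and> I \<inter> cantor_set N \<subseteq> cantor_int N k j" by blast
  from choice[OF this] obtain jk where jk0: "\<forall>k. jk k < 2^k \<and> I \<inter> cantor_set N \<subseteq> cantor_int N k (jk k)" by blast
  then have jk: "\<And>k. jk k < 2^k \<and> I \<inter> cantor_set N \<subseteq> cantor_int N k (jk k)" by blast
  define Z where "Z = (\<Inter>k. cantor_int N k (jk k))"
  have Zs: "Z \<in> sets M" unfolding Z_def setsM
    by (intro borel_closed closed_INT) (auto simp: cantor_int_def)
  have Zle: "\<And>k. measure M Z \<le> qq^k"
  proof -
    fix k
    have "measure M Z \<le> measure M (cantor_int N k (jk k))"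
      by (rule finite_measure.finite_measure_mono[OF fm]) (auto simp: Z_def int_sets)
    also have "\<dots> = omega_mass N k (jk k)" using jk by (simp add: meas_int)
    also have "\<dots> \<le> qq^k" by (rule om_le)
    finally show "measure M Z \<le> qq^k" .
  qed
  have Z0: "measure M Z = 0"
  proof (rule ccontr)
    assume "measure M Z \<noteq> 0"
    then have "0 < measure M Z" using measure_nonneg[of M Z] by linarith
    moreover have "qq < 1" using qq_le by simp
    ultimately obtain k where "qq^k < measure M Z" using real_arch_pow_inv by blast
    then show False using Zle[of k] by simp
  qed
  have Zn: "Z \<in> null_sets M"
    using Zs Z0 finite_measure.emeasure_eq_measure[OF fm, of Z] by (simp add: null_sets_def)
  have "AE x in M. ennreal ((H_flat_I N K M I x)\<^sup>2) * indicator I x \<le> 0"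
    using AE_E AE_not_in[OF Zn]
  proof eventually_elim
    case (elim x)
    show ?case
    proof (cases "x \<in> I")
      case True
      then have "x \<in> Z" using elim jk unfolding Z_def by blast
      then show ?thesis using elim by simp
    qed simp
  qed
  then have "(\<integral>\<^sup>+ x \<in> I. ennreal ((H_flat_I N K M I x)\<^sup>2) \<partial>M) \<le> (\<integral>\<^sup>+ x. 0 \<partial>M)"
    by (rule nn_integral_mono_AE)
  then show ?thesis by simp
next
  case False
  define P where "P = (\<lambda>k. \<exists>j<2^k. I \<inter> cantor_set N \<subseteq> cantor_int N k j)"
  have nP: "\<exists>k. \<not> P k" using False unfolding P_def by blast
  define k1 where "k1 = (LEAST k. \<not> P k)"
  have nPk1: "\<not> P k1" unfolding k1_def using nP by (rule LeastI_ex)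
  have P0: "P 0"
  proof -
    have "cantor_set N \<subseteq> cantor_int N 0 0"
    proof
      fix x assume "x \<in> cantor_set N"
      then obtain i where "i < 2^0" "x \<in> cantor_int N 0 i" using E_iff by blast
      then show "x \<in> cantor_int N 0 0" by simp
    qed
    then show ?thesis unfolding P_def by auto
  qed
  then have "k1 \<noteq> 0" using nPk1 by metis
  then obtain k0 where k1: "k1 = Suc k0" using not0_implies_Suc by blast
  have "P k0" using not_less_Least[of k0 "\<lambda>k. \<not> P k"] k1 unfolding k1_def[symmetric] by auto
  then obtain j where j: "j < 2^k0" and sub: "I \<inter> cantor_set N \<subseteq> cantor_int N k0 j"
    unfolding P_def by blast
  have "\<not> (I \<inter> cantor_set N \<subseteq> cantor_int N k1 (2*j))" using nPk1 j unfolding P_def k1 by auto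
  then obtain y where y: "y \<in> I \<inter> cantor_set N" "y \<notin> cantor_int N k1 (2*j)" by blast
  have "\<not> (I \<inter> cantor_set N \<subseteq> cantor_int N k1 (2*j+1))" using nPk1 j unfolding P_def k1 by auto
  then obtain y' where y': "y' \<in> I \<inter> cantor_set N" "y' \<notin> cantor_int N k1 (2*j+1)" by blast
  have yR: "y \<in> cantor_int N k1 (2*j+1)" using E_child[of y k0 j] y sub j unfolding k1 by auto
  have yL: "y' \<in> cantor_int N k1 (2*j)" using E_child[of y' k0 j] y' sub j unfolding k1 by auto
  let ?l = "cantor_left N k0 j" let ?e = "1 / real N ^ k0" let ?f = "1 / real N ^ Suc k0"
  have e0: "?e > 0" using N0 by simp
  have ef: "?f \<le> ?e / 4" using RN e0 by (simp add: field_simps)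
  have cJv: "cantor_center N k0 j = ?l + ?e/2" by (simp add: ccen[OF N0])
  have "y' \<le> ?l + ?f" using yL unfolding k1 cint[OF N0] cl_even by simp
  then have c1: "y' \<le> cantor_center N k0 j" unfolding cJv using ef e0 by (rule lin1)
  have "y \<ge> ?l + (?e - ?f)" using yR unfolding k1 cint[OF N0] cl_odd[OF N0] by simp
  then have c2: "cantor_center N k0 j \<le> y" unfolding cJv using ef e0 by (rule lin2)
  have cJ: "cantor_center N k0 j \<in> I" using ivl[OF I _ _ c1 c2] y y' by auto
  define S where "S = {m. m \<le> k0 \<and> cantor_center N m (j div 2^(k0-m)) \<in> I}"
  define a where "a = (\<lambda>m. 1 / real N ^ m / omega_mass N m (j div 2^(k0-m)))"
  define Bd where "Bd = 8 * real N * (\<Sum>m\<in>S. a m)"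
  have Hb: "\<And>x. x \<in> I \<inter> cantor_set N \<Longrightarrow> \<bar>H_flat_I N K M I x\<bar> \<le> Bd"
    unfolding Bd_def S_def a_def by (rule H_bound[OF fk I sub j y'(1) cJ])
  have est: "(\<Sum>m\<in>S. a m)^2 * omega_mass N k0 j \<le> 16 * sigma_dot N M I"
    unfolding S_def a_def by (rule sum_est[OF j])
  have "AE x in M. ennreal ((H_flat_I N K M I x)\<^sup>2) * indicator I x \<le> ennreal (Bd^2) * indicator (cantor_int N k0 j) x"
    using AE_E
  proof eventually_elim
    case (elim x)
    show ?case
    proof (cases "x \<in> I")
      case True
      then have xJ: "x \<in> cantor_int N k0 j" using elim sub by blast
      have "\<bar>H_flat_I N K M I x\<bar> \<le> Bd" using Hb True elim by blast
      then have "\<bar>H_flat_I N K M I x\<bar>^2 \<le> Bd^2" by (rule power_mono) simp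
      then have "(H_flat_I N K M I x)\<^sup>2 \<le> Bd^2" by simp
      then show ?thesis using True xJ by (simp add: ennreal_leI)
    qed simp
  qed
  then have "(\<integral>\<^sup>+ x \<in> I. ennreal ((H_flat_I N K M I x)\<^sup>2) \<partial>M)
      \<le> (\<integral>\<^sup>+ x. ennreal (Bd^2) * indicator (cantor_int N k0 j) x \<partial>M)"
    by (rule nn_integral_mono_AE)
  also have "\<dots> = ennreal (Bd^2) * emeasure M (cantor_int N k0 j)"
    by (rule nn_integral_cmult_indicator) (rule int_sets)
  also have "\<dots> = ennreal (Bd^2 * omega_mass N k0 j)"
    using emeas_int[OF j] om_pos[of k0 j] by (simp add: ennreal_mult)
  also have "\<dots> \<le> ennreal (1024 * (real N)^2 * sigma_dot N M I)"
  proof (rule ennreal_leI)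
    have "Bd^2 * omega_mass N k0 j = 64 * (real N)^2 * ((\<Sum>m\<in>S. a m)^2 * omega_mass N k0 j)"
      unfolding Bd_def by (simp add: power_mult_distrib)
    also have "\<dots> \<le> 64 * (real N)^2 * (16 * sigma_dot N M I)" using est by (intro mult_left_mono) auto
    finally show "Bd^2 * omega_mass N k0 j \<le> 1024 * (real N)^2 * sigma_dot N M I" by simp
  qed
  finally show ?thesis .
qed

end

theorem mainTheorem6:
  fixes N :: nat and \<rho> :: real and K :: "real \<Rightarrow> real" and M :: "real measure"
  assumes "N \<ge> 16" and "2/3 \<le> \<rho>" and "\<rho> < 1"
    and "flat_kernel N \<rho> K"
    and "redistributed_cantor_measure N M"
  shows "\<exists>C::real. \<forall>I::real set. is_interval I \<longrightarrow>
           (\<integral>\<^sup>+ x \<in> I. ennreal ((H_flat_I N K M I x)\<^sup>2) \<partial>M) \<le> ennreal (C * sigma_dot N M I)"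
proof -
  interpret cM N M
    by unfold_locales (use assms(1,5) in auto)
  show ?thesis
    by (intro exI[of _ "1024 * (real N)^2"] allI impI main_est[OF assms(4)])
qed

end
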